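(* Let $g$ be an even $C^1$ function defined in a neighbourhood of $0\in\mathbb{C}$ with $g(z)=o(z)$, and suppose $g$ satisfies the polynomial condition with respect to a polynomial $p(\zeta_1,\zeta_2)$. Then $g$ also satisfies the polynomial condition with respect to the odd part $p_{\mathrm{odd}}(\zeta_1,\zeta_2)=\tfrac12\bigl(p(\zeta_1,\zeta_2)-p(-\zeta_1,-\zeta_2)\bigr)$ of $p$ (equivalently, the sum of the homogeneous components of $p$ of odd degree).
   Context: All functions defined near the origin are assumed to be of class $C^1$. Polynomials $p(\zeta_1,\zeta_2)$ are holomorphic polynomials in two complex variables with complex coefficients. Polynomial condition: let $g$ be an even $C^1$ function defined near $0\in\mathbb{C}$ with $g(z)=o(z)$ as $z\to0$. We say $g$ satisfies the polynomial condition with respect to the polynomial $p$ if for every $C^1$ function $R$ defined near $0$ with $R(z)=o(g(z))$ as $z\to 0$, both $\operatorname{Im} p(z,\bar z+g(z)+R(z))>0$ and $\operatorname{Im} p(z,\bar z-g(z)+R(z))<0$ hold for all $z\neq0$ sufficiently close to $0$ (the neighbourhood may depend on $R$). *)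

theory Defs
  imports "HOL-Analysis.Analysis" "HOL-Library.Landau_Symbols"
begin

text \<open>C^1 near 0 (as a map of the real plane C = R^2): differentiable on a ball
  around 0 with continuous (Frechet) derivative.\<close>
definition C1_near0 :: "(complex \<Rightarrow> complex) \<Rightarrow> bool" where
  "C1_near0 f \<longleftrightarrow> (\<exists>r>0. \<exists>f' :: complex \<Rightarrow> (complex \<Rightarrow>\<^sub>L complex).
      (\<forall>z\<in>ball 0 r. (f has_derivative blinfun_apply (f' z)) (at z)) \<and>
      continuous_on (ball 0 r) f')"

definition even_near0 :: "(complex \<Rightarrow> complex) \<Rightarrow> bool" where
  "even_near0 f \<longleftrightarrow> (\<exists>r>0. \<forall>z\<in>ball 0 r. f (- z) = f z)"

definition is_poly2 :: "(complex \<Rightarrow> complex \<Rightarrow> complex) \<Rightarrow> bool" where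
  "is_poly2 p \<longleftrightarrow> (\<exists>N::nat. \<exists>c :: nat \<Rightarrow> nat \<Rightarrow> complex.
      \<forall>z w. p z w = (\<Sum>i\<le>N. \<Sum>j\<le>N. c i j * z ^ i * w ^ j))"

definition poly_odd_part :: "(complex \<Rightarrow> complex \<Rightarrow> complex) \<Rightarrow> complex \<Rightarrow> complex \<Rightarrow> complex" where
  "poly_odd_part p z w = (p z w - p (- z) (- w)) / 2"

definition polynomial_condition ::
  "(complex \<Rightarrow> complex) \<Rightarrow> (complex \<Rightarrow> complex \<Rightarrow> complex) \<Rightarrow> bool" where
  "polynomial_condition g p \<longleftrightarrow>
     (\<forall>R. C1_near0 R \<and> R \<in> o[at 0](g) \<longrightarrow>
        (\<forall>\<^sub>F z in at 0. Im (p z (cnj z + g z + R z)) > 0 \<and>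
                         Im (p z (cnj z - g z + R z)) < 0))"

end

theory Submission
  imports Defs
begin

lemma ev_neg0:
  assumes "\<forall>\<^sub>F x in at (0::complex). P x"
  shows "\<forall>\<^sub>F x in at 0. P (- x)"
proof -
  from assms obtain d where d: "d > 0" "\<And>x. x \<noteq> 0 \<Longrightarrow> dist x 0 < d \<Longrightarrow> P x"
    unfolding eventually_at by auto
  show ?thesis unfolding eventually_at
    using d by (intro exI[of _ d]) (auto simp: dist_norm)
qed

lemma C1_neg:
  assumes "C1_near0 R"
  shows "C1_near0 (\<lambda>u. - R (- u))"
proof -
  from assms obtain r f' where r: "r > 0"
    and d: "\<forall>z\<in>ball 0 r. (R has_derivative blinfun_apply (f' z)) (at z)"
    and c: "continuous_on (ball 0 r) f'"
    unfolding C1_near0_def by auto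
  have "\<forall>z\<in>ball 0 r. ((\<lambda>u. - R (- u)) has_derivative blinfun_apply (f' (- z))) (at z)"
  proof
    fix z :: complex assume z: "z \<in> ball 0 r"
    hence "- z \<in> ball 0 r" by auto
    hence D: "(R has_derivative blinfun_apply (f' (- z))) (at (- z))" using d by auto
    have "((\<lambda>u. R (- u)) has_derivative (\<lambda>h. blinfun_apply (f' (- z)) (- h))) (at z)"
      using has_derivative_compose[OF has_derivative_minus[OF has_derivative_ident] D]
      by (simp add: o_def)
    hence "((\<lambda>u. - R (- u)) has_derivative (\<lambda>h. - blinfun_apply (f' (- z)) (- h))) (at z)"
      by (rule has_derivative_minus)
    moreover have "(\<lambda>h. - blinfun_apply (f' (- z)) (- h)) = blinfun_apply (f' (- z))"
      by (auto simp: blinfun.minus_right)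
    ultimately show "((\<lambda>u. - R (- u)) has_derivative blinfun_apply (f' (- z))) (at z)" by simp
  qed
  moreover have "continuous_on (ball 0 r) (\<lambda>z. f' (- z))"
    by (rule continuous_on_compose2[OF c continuous_on_minus[OF continuous_on_id]]) auto
  ultimately show ?thesis unfolding C1_near0_def using r
    by (intro exI[of _ r] conjI exI[of _ "\<lambda>z. f' (- z)"]) auto
qed

theorem lemma2p3:
  fixes g :: "complex \<Rightarrow> complex" and p :: "complex \<Rightarrow> complex \<Rightarrow> complex"
  assumes "C1_near0 g" and "even_near0 g" and "g \<in> o[at 0](\<lambda>z. z)"
    and "is_poly2 p"
    and "polynomial_condition g p"
  shows "polynomial_condition g (poly_odd_part p)"
  unfolding polynomial_condition_def
proof (intro allI impI)
  fix R assume RR: "C1_near0 R \<and> R \<in> o[at 0](g)"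
  define R' where "R' = (\<lambda>u. - R (- u))"
  from assms(2) obtain r where r: "r > 0" "\<forall>z\<in>ball 0 r. g (- z) = g z"
    unfolding even_near0_def by auto
  have ev: "\<forall>\<^sub>F z in at 0. g (- z) = g z"
    unfolding eventually_at using r by (intro exI[of _ r]) (auto simp: dist_norm)
  have "R' \<in> o[at 0](g)"
  proof (rule landau_o.smallI)
    fix c :: real assume c: "c > 0"
    have "\<forall>\<^sub>F x in at 0. norm (R x) \<le> c * norm (g x)"
      using landau_o.smallD[OF conjunct2[OF RR] c] .
    from ev_neg0[OF this] show "\<forall>\<^sub>F x in at 0. norm (R' x) \<le> c * norm (g x)"
      using ev by eventually_elim (auto simp: R'_def)
  qed
  moreover have "C1_near0 R'" unfolding R'_def by (rule C1_neg[OF conjunct1[OF RR]])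
  ultimately have RR': "C1_near0 R' \<and> R' \<in> o[at 0](g)" by simp
  have h2: "\<forall>\<^sub>F z in at 0. Im (p z (cnj z + g z + R' z)) > 0 \<and>
                         Im (p z (cnj z - g z + R' z)) < 0"
    using assms(5)[unfolded polynomial_condition_def, rule_format, OF RR'] .
  have h1: "\<forall>\<^sub>F z in at 0. Im (p z (cnj z + g z + R z)) > 0 \<and>
                         Im (p z (cnj z - g z + R z)) < 0"
    using assms(5)[unfolded polynomial_condition_def, rule_format, OF RR] .
  show "\<forall>\<^sub>F z in at 0. Im (poly_odd_part p z (cnj z + g z + R z)) > 0 \<and>
                         Im (poly_odd_part p z (cnj z - g z + R z)) < 0"
    using h1 ev_neg0[OF h2] ev
  proof eventually_elim
    case (elim z)
    have e1: "- (cnj z + g z + R z) = cnj (- z) - g (- z) + R' (- z)"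
      using elim(3) by (simp add: R'_def)
    have e2: "- (cnj z - g z + R z) = cnj (- z) + g (- z) + R' (- z)"
      using elim(3) by (simp add: R'_def)
    have "Im (poly_odd_part p z (cnj z + g z + R z)) = (Im (p z (cnj z + g z + R z)) - Im (p (- z) (cnj (- z) - g (- z) + R' (- z)))) / 2"
      unfolding poly_odd_part_def e1[symmetric] by simp
    moreover have "Im (poly_odd_part p z (cnj z - g z + R z)) = (Im (p z (cnj z - g z + R z)) - Im (p (- z) (cnj (- z) + g (- z) + R' (- z)))) / 2"
      unfolding poly_odd_part_def e2[symmetric] by simp
    ultimately show ?case using elim(1,2) by simp
  qed
qed

end
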